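(* Let $G = (V, E)$ be a directed proximity graph whose finitely many nodes $V$ correspond to vectors of a finite set $\mathcal{D} \subset \mathbb{R}^d$ (each node identified with its vector), and let $q \in \mathbb{R}^d$ be a query. For a node $o$, let $\mathcal{N}_o = \{p \mid (p, o) \in E\}$. Then there exists a scalar $\bar{\mu}$ such that for every $\mu > \max(\bar{\mu}, 0)$ and every node $o$ on the search path of the greedy graph nearest neighbor search (GNNS) run with query $q' = \mu q$ and having $\mathcal{N}_o \neq \emptyset$, there is a node $p^* \in \mathcal{N}_o$ with $$p^* \in \Big\{\operatorname{argmax}_{p \in \mathcal{N}_o} \langle p, q\rangle\Big\} \cap \Big\{\operatorname{argmin}_{p \in \mathcal{N}_o} \lVert p - q'\rVert\Big\}.$$
   Context: A proximity graph on $\mathcal{D}$ is a directed graph whose nodes are the points of $\mathcal{D}$ and whose edges are chosen by some criterion (the criterion is arbitrary here). Greedy graph nearest neighbor search (GNNS) with query $x$: starting from entry nodes, it repeatedly takes the current best candidate node, inspects its neighbors in $G$, and moves toward / keeps the neighbors closest to $x$ in Euclidean distance (maintaining a bounded candidate pool), until no improvement is possible; the nodes it visits form its search path. $\lVert\cdot\rVert$ is the Euclidean norm and $\langle\cdot,\cdot\rangle$ the standard inner product. *)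

theory Defs
  imports "HOL-Analysis.Analysis"
begin

definition in_nbrs :: "('a \<times> 'a) set \<Rightarrow> 'a \<Rightarrow> 'a set" where
  "in_nbrs E v = {p. (p, v) \<in> E}"

definition argmax_on :: "('a \<Rightarrow> real) \<Rightarrow> 'a set \<Rightarrow> 'a set" where
  "argmax_on f S = {x \<in> S. \<forall>y\<in>S. f y \<le> f x}"

definition argmin_on :: "('a \<Rightarrow> real) \<Rightarrow> 'a set \<Rightarrow> 'a set" where
  "argmin_on f S = {x \<in> S. \<forall>y\<in>S. f x \<le> f y}"

end

theory Submission
  imports Defs
begin

lemma sqexp: "(norm (p - c *\<^sub>R q))\<^sup>2 = (norm p)\<^sup>2 - 2*c*inner p q + c\<^sup>2 * (norm q)\<^sup>2"
  for p q :: "'a::real_inner"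
  unfolding power2_norm_eq_inner by (simp add: inner_diff_left inner_diff_right inner_commute algebra_simps power2_eq_square)

lemma single:
  fixes N :: "'a::real_inner set" and q :: 'a
  assumes fin: "finite N" and ne: "N \<noteq> {}"
  shows "\<exists>mb. \<forall>mu. mu > mb \<longrightarrow> (\<exists>p\<in>N. p \<in> argmax_on (\<lambda>p. inner p q) N
                    \<inter> argmin_on (\<lambda>p. norm (p - mu *\<^sub>R q)) N)"
proof -
  define M where "M = Max ((\<lambda>p. inner p q) ` N)"
  have Mge: "inner y q \<le> M" if "y \<in> N" for y
    unfolding M_def using fin that by simp
  have "M \<in> (\<lambda>p. inner p q) ` N" unfolding M_def using fin ne by simp
  define A where "A = {p\<in>N. inner p q = M}"
  have Afin: "finite A" and Ane: "A \<noteq> {}"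
    using fin \<open>M \<in> _\<close> by (auto simp: A_def)
  define m where "m = Min (norm ` A)"
  have "m \<in> norm ` A" unfolding m_def using Afin Ane by simp
  then obtain ps where ps: "ps \<in> A" "norm ps = m" by auto
  have mle: "m \<le> norm y" if "y \<in> A" for y unfolding m_def using Afin that by simp
  define mb where "mb = Max (insert 0 ((\<lambda>p. ((norm ps)\<^sup>2 - (norm p)\<^sup>2) / (2*(M - inner p q))) ` (N - A)))"
  have mbge: "((norm ps)\<^sup>2 - (norm p)\<^sup>2) / (2*(M - inner p q)) \<le> mb" if "p \<in> N - A" for p
    unfolding mb_def using fin that by simp
  have mb0: "0 \<le> mb" unfolding mb_def using fin by simp
  show ?thesis
  proof (intro exI allI impI)
    fix mu :: real assume mu: "mu > mb"
    have psN: "ps \<in> N" and psM: "inner ps q = M" using ps by (auto simp: A_def)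
    have "norm (ps - mu *\<^sub>R q) \<le> norm (y - mu *\<^sub>R q)" if y: "y \<in> N" for y
    proof -
      have "(norm (ps - mu *\<^sub>R q))\<^sup>2 \<le> (norm (y - mu *\<^sub>R q))\<^sup>2"
      proof (cases "y \<in> A")
        case True
        then have "inner y q = M" "norm ps \<le> norm y" using mle ps by (auto simp: A_def)
        then have "(norm ps)\<^sup>2 \<le> (norm y)\<^sup>2" by (simp add: power_mono)
        then show ?thesis unfolding sqexp using \<open>inner y q = M\<close> psM by simp
      next
        case False
        then have lt: "inner y q < M" using Mge[OF y] y by (auto simp: A_def)
        have "((norm ps)\<^sup>2 - (norm y)\<^sup>2) / (2*(M - inner y q)) \<le> mu"
          using mbge[of y] y False mu by auto
        then have "(norm ps)\<^sup>2 - (norm y)\<^sup>2 \<le> mu * (2*(M - inner y q))"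
          using lt by (simp add: divide_le_eq)
        then show ?thesis unfolding sqexp using psM by (simp add: algebra_simps)
      qed
      then show ?thesis by (rule power2_le_imp_le) simp
    qed
    then have "ps \<in> argmin_on (\<lambda>p. norm (p - mu *\<^sub>R q)) N"
      using psN unfolding argmin_on_def by blast
    moreover have "ps \<in> argmax_on (\<lambda>p. inner p q) N"
      proof -
      have "\<forall>y\<in>N. inner y q \<le> inner ps q" unfolding psM using Mge by blast
      then show ?thesis unfolding argmax_on_def using psN by blast
    qed
    ultimately show "\<exists>p\<in>N. p \<in> argmax_on (\<lambda>p. inner p q) N \<inter> argmin_on (\<lambda>p. norm (p - mu *\<^sub>R q)) N"
      using psN by blast
  qed
qed

theorem theorem2:
  fixes D :: "(real^'n) set"
    and E :: "((real^'n) \<times> (real^'n)) set"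
    and q :: "real^'n"
    and search_path :: "real^'n \<Rightarrow> (real^'n) set"
  assumes "finite D"
    and "E \<subseteq> D \<times> D"
    and "\<forall>x. search_path x \<subseteq> D"
  shows "\<exists>mubar::real. \<forall>mu::real. mu > max mubar 0 \<longrightarrow>
           (\<forall>v \<in> search_path (mu *\<^sub>R q). in_nbrs E v \<noteq> {} \<longrightarrow>
              (\<exists>p \<in> in_nbrs E v.
                 p \<in> argmax_on (\<lambda>p. inner p q) (in_nbrs E v)
                    \<inter> argmin_on (\<lambda>p. norm (p - mu *\<^sub>R q)) (in_nbrs E v)))"
proof -
  have finN: "finite (in_nbrs E v)" for v
  proof -
    have "in_nbrs E v \<subseteq> D" using assms(2) by (auto simp: in_nbrs_def)
    then show ?thesis using assms(1) finite_subset by blast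
  qed
  have "\<forall>v. \<exists>mb. in_nbrs E v \<noteq> {} \<longrightarrow> (\<forall>mu. mu > mb \<longrightarrow> (\<exists>p\<in>in_nbrs E v. p \<in> argmax_on (\<lambda>p. inner p q) (in_nbrs E v)
                    \<inter> argmin_on (\<lambda>p. norm (p - mu *\<^sub>R q)) (in_nbrs E v)))"
    using single[OF finN] by blast
  then obtain f where f: "\<And>v mu. in_nbrs E v \<noteq> {} \<Longrightarrow> mu > f v \<Longrightarrow> (\<exists>p\<in>in_nbrs E v. p \<in> argmax_on (\<lambda>p. inner p q) (in_nbrs E v)
                    \<inter> argmin_on (\<lambda>p. norm (p - mu *\<^sub>R q)) (in_nbrs E v))"
    by metis
  define mb where "mb = Max (insert 0 (f ` D))"
  have fmb: "f v \<le> mb" if "v \<in> D" for v unfolding mb_def using assms(1) that by simp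
  show ?thesis
  proof (intro exI[of _ mb] allI impI ballI)
    fix mu v assume "mu > max mb 0" "v \<in> search_path (mu *\<^sub>R q)" "in_nbrs E v \<noteq> {}"
    then have "v \<in> D" using assms(3) by blast
    then have "f v \<le> mb" by (rule fmb)
    then have "mu > f v" using \<open>mu > max mb 0\<close> by linarith
    then show "\<exists>p \<in> in_nbrs E v. p \<in> argmax_on (\<lambda>p. inner p q) (in_nbrs E v)
                    \<inter> argmin_on (\<lambda>p. norm (p - mu *\<^sub>R q)) (in_nbrs E v)"
      by (rule f[OF \<open>in_nbrs E v \<noteq> {}\<close>])
  qed
qed

end
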